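(* Assume the standing hypotheses and fix a constant $C_1>0$. Then there exist $\rho>0$, $\bar\mu\in(0,\hat\mu]$ and constants $0<c\le C$ (independent of $\mu$ and $(x,\lambda)$) such that for every $\mu\in(0,\bar\mu]$ and every $(x,\lambda)\in\mathcal B((x^*,\lambda^* ),\delta)$ with $x>0$, $\lambda>0$, $\|(x,\lambda)-(x^\mu,\lambda^\mu)\|<\rho$ and $\|F_\mu(x,\lambda)\|\le C_1\mu$, one has $$x_i\le C\mu \ \ (i\in\mathcal A),\qquad c\le x_i\le C\ \ (i\in\mathcal I),\qquad c\le \lambda_i\le C\ \ (i\in\mathcal A),\qquad \lambda_i\le C\mu\ \ (i\in\mathcal I).$$ That is, $x_i=\mathcal O(\mu)$, $\lambda_i=\Theta(1)$ for $i\in\mathcal A$ and $x_i=\Theta(1)$, $\lambda_i=\mathcal O(\mu)$ for $i\in\mathcal I$.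
   Context: Problem: minimize $f(x)$ subject to $x\ge 0$, where $f:\mathbb R^n\to\mathbb R$ is twice continuously differentiable with locally Lipschitz continuous Hessian. All norms are Euclidean; $e$ is the all-ones vector; for vectors $x,\lambda$, $X=\mathrm{diag}(x)$, $\Lambda=\mathrm{diag}(\lambda)$. For $\mu\in\mathbb R$ define $F_\mu:\mathbb R^{2n}\to\mathbb R^{2n}$ by $F_\mu(x,\lambda)=\begin{bmatrix}\nabla f(x)-\lambda\\ \Lambda X e-\mu e\end{bmatrix}$, with Jacobian (independent of $\mu$) $F'(x,\lambda)=\begin{bmatrix}H&-I\\ \Lambda&X\end{bmatrix}$, $H=\nabla^2 f(x)$. Standing hypotheses: $(x^*,\lambda^* )$ satisfies $\nabla f(x^* )=\lambda^*$, $x^*\ge0$, $\lambda^*\ge0$, $x^*_i\lambda^*_i=0$ for all $i$, $x^*+\lambda^*>0$ (strict complementarity), and the second-order condition $[\nabla^2 f(x^* )]_{\mathcal I\mathcal I}\succ 0$. Here $\mathcal A=\{i:x^*_i=0\}$ (active set) and $\mathcal I=\{i:x^*_i>0\}$ (inactive set); for a matrix/vector, subscripts $\mathcal A,\mathcal I$ denote the corresponding row/column sub-blocks. Further, $\delta>0$ is such that $F'$ is nonsingular on $\mathcal B((x^*,\lambda^* ),\delta)=\{(x,\lambda):\|(x,\lambda)-(x^*,\lambda^* )\|<\delta\}$ with $\|F'(x,\lambda)^{-1}\|\le M$ there, and $\hat\mu>0$ is such that for $\mu\in(0,\hat\mu]$ there is a Lipschitz continuous map $\mu\mapsto(x^\mu,\lambda^\mu)\in\mathcal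 B((x^*,\lambda^* ),\delta)$ (the barrier trajectory) with $F_\mu(x^\mu,\lambda^\mu)=0$ and $\|(x^\mu,\lambda^\mu)-(x^*,\lambda^* )\|\le C_4\mu$ for a constant $C_4$. *)

theory Defs
  imports "HOL-Analysis.Analysis"
begin

text \<open>Points (x, lambda) of R^(2n) are pairs in (real^'n) \<times> (real^'n); the product norm
  in Isabelle is Euclidean: norm (a,b) = sqrt (norm a ^ 2 + norm b ^ 2).\<close>

definition Fmu :: "(real^'n \<Rightarrow> real^'n) \<Rightarrow> real \<Rightarrow> (real^'n) \<times> (real^'n) \<Rightarrow> (real^'n) \<times> (real^'n)" where
  "Fmu g mu p = (g (fst p) - snd p, (\<chi> i. (snd p $ i) * (fst p $ i) - mu))"

text \<open>The Jacobian F'(x,lambda) = [[H, -I],[Lambda, X]] as a linear map on pairs,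
  with H the Hessian of f.\<close>
definition Fjac :: "(real^'n \<Rightarrow> real^'n^'n) \<Rightarrow> (real^'n) \<times> (real^'n) \<Rightarrow> (real^'n) \<times> (real^'n) \<Rightarrow> (real^'n) \<times> (real^'n)" where
  "Fjac H p d = (H (fst p) *v fst d - snd d,
                 (\<chi> i. (snd p $ i) * (fst d $ i) + (fst p $ i) * (snd d $ i)))"

end

theory Submission
  imports Defs
begin

theorem lemma4:
  fixes f :: "real^'n \<Rightarrow> real"
    and g :: "real^'n \<Rightarrow> real^'n"
    and H :: "real^'n \<Rightarrow> real^'n^'n"
    and xs ls :: "real^'n"
    and xmu lmu :: "real \<Rightarrow> real^'n"
    and \<delta> M muhat C4 C1 :: real
  assumes grad: "\<And>x. (f has_derivative (\<lambda>h. g x \<bullet> h)) (at x)"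
    and hess: "\<And>x. (g has_derivative (\<lambda>h. H x *v h)) (at x)"
    and hess_cont: "continuous_on UNIV H"
    and hess_lip: "\<And>x. \<exists>r>0. \<exists>L. \<forall>y\<in>ball x r. \<forall>z\<in>ball x r. norm (H y - H z) \<le> L * dist y z"
    and kkt_grad: "g xs = ls"
    and xs_nn: "\<And>i. xs $ i \<ge> 0"
    and ls_nn: "\<And>i. ls $ i \<ge> 0"
    and compl: "\<And>i. xs $ i * ls $ i = 0"
    and strict: "\<And>i. xs $ i + ls $ i > 0"
    and sosc: "\<And>v. v \<noteq> 0 \<Longrightarrow> (\<forall>i. xs $ i = 0 \<longrightarrow> v $ i = 0) \<Longrightarrow> v \<bullet> (H xs *v v) > 0"
    and \<delta>_pos: "\<delta> > 0"
    and nonsing: "\<And>p. p \<in> ball (xs, ls) \<delta> \<Longrightarrow>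
                    bij (Fjac H p) \<and> onorm (inv (Fjac H p)) \<le> M"
    and muhat_pos: "muhat > 0"
    and traj_lip: "\<exists>L. \<forall>m1\<in>{0<..muhat}. \<forall>m2\<in>{0<..muhat}.
                    dist (xmu m1, lmu m1) (xmu m2, lmu m2) \<le> L * \<bar>m1 - m2\<bar>"
    and traj_ball: "\<And>mu. mu \<in> {0<..muhat} \<Longrightarrow> (xmu mu, lmu mu) \<in> ball (xs, ls) \<delta>"
    and traj_eq: "\<And>mu. mu \<in> {0<..muhat} \<Longrightarrow> Fmu g mu (xmu mu, lmu mu) = 0"
    and traj_close: "\<And>mu. mu \<in> {0<..muhat} \<Longrightarrow> norm ((xmu mu, lmu mu) - (xs, ls)) \<le> C4 * mu"
    and C1_pos: "C1 > 0"
  shows "\<exists>\<rho>>0. \<exists>mubar. 0 < mubar \<and> mubar \<le> muhat \<and> (\<exists>c C. 0 < c \<and> c \<le> C \<and>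
           (\<forall>mu x l. 0 < mu \<and> mu \<le> mubar \<and> (x, l) \<in> ball (xs, ls) \<delta> \<and>
              (\<forall>i. x $ i > 0) \<and> (\<forall>i. l $ i > 0) \<and>
              norm ((x, l) - (xmu mu, lmu mu)) < \<rho> \<and> norm (Fmu g mu (x, l)) \<le> C1 * mu \<longrightarrow>
              (\<forall>i. xs $ i = 0 \<longrightarrow> x $ i \<le> C * mu \<and> c \<le> l $ i \<and> l $ i \<le> C) \<and>
              (\<forall>i. xs $ i > 0 \<longrightarrow> c \<le> x $ i \<and> x $ i \<le> C \<and> l $ i \<le> C * mu)))"
proof -
  define m where "m = Min (range (\<lambda>i. xs $ i + ls $ i))"
  have mpos: "m > 0" unfolding m_def using strict by (simp add: Min_gr_iff)
  have mle: "\<And>i. m \<le> xs $ i + ls $ i" unfolding m_def by (intro Min_le) auto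
  have C4nn: "C4 \<ge> 0"
  proof -
    have "0 \<le> C4 * muhat" using traj_close[of muhat] muhat_pos norm_ge_zero[of "(xmu muhat, lmu muhat) - (xs, ls)"] by (meson greaterThanAtMost_iff order_refl order_trans)
    thus ?thesis using muhat_pos by (simp add: zero_le_mult_iff)
  qed
  define mubar where "mubar = min muhat (m / (4 * (C4 + 1)))"
  define c where "c = m / 2"
  define C where "C = max (norm xs + norm ls + m) (2 * (1 + C1) / m)"
  have mubar_pos: "mubar > 0" unfolding mubar_def using muhat_pos mpos C4nn by simp
  have key: "C4 * mubar \<le> m / 4"
  proof -
    have "mubar \<le> m / (4 * (C4 + 1))" unfolding mubar_def by simp
    hence "C4 * mubar \<le> C4 * (m / (4 * (C4 + 1)))" using C4nn by (rule mult_left_mono)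
    also have "\<dots> \<le> m / 4" using C4nn mpos by (simp add: field_simps)
    finally show ?thesis .
  qed
  have main: "\<forall>mu x l. 0 < mu \<and> mu \<le> mubar \<and> (x, l) \<in> ball (xs, ls) \<delta> \<and>
              (\<forall>i. x $ i > 0) \<and> (\<forall>i. l $ i > 0) \<and>
              norm ((x, l) - (xmu mu, lmu mu)) < m/4 \<and> norm (Fmu g mu (x, l)) \<le> C1 * mu \<longrightarrow>
              (\<forall>i. xs $ i = 0 \<longrightarrow> x $ i \<le> C * mu \<and> c \<le> l $ i \<and> l $ i \<le> C) \<and>
              (\<forall>i. xs $ i > 0 \<longrightarrow> c \<le> x $ i \<and> x $ i \<le> C \<and> l $ i \<le> C * mu)"
  proof (intro allI impI)
    fix mu x l
    assume A: "0 < mu \<and> mu \<le> mubar \<and> (x, l) \<in> ball (xs, ls) \<delta> \<and>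
              (\<forall>i. x $ i > 0) \<and> (\<forall>i. l $ i > 0) \<and>
              norm ((x, l) - (xmu mu, lmu mu)) < m/4 \<and> norm (Fmu g mu (x, l)) \<le> C1 * mu"
    have mu_in: "mu \<in> {0<..muhat}" using A mubar_def by auto
    have d1: "norm ((xmu mu, lmu mu) - (xs, ls)) \<le> m/4"
      using traj_close[OF mu_in] A key C4nn mult_left_mono[of mu mubar C4] by linarith
    have dist: "norm ((x, l) - (xs, ls)) < m/2"
      using norm_triangle_ineq[of "(x, l) - (xmu mu, lmu mu)" "(xmu mu, lmu mu) - (xs, ls)"] A d1
      by simp
    have dx: "\<And>i. \<bar>x $ i - xs $ i\<bar> < m/2"
    proof -
      fix i
      have "\<bar>(x - xs) $ i\<bar> \<le> norm (x - xs)" by (rule component_le_norm_cart)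
      also have "\<dots> \<le> norm ((x, l) - (xs, ls))" using norm_fst_le[of "x - xs" "l - ls"] by simp
      finally show "\<bar>x $ i - xs $ i\<bar> < m/2" using dist by simp
    qed
    have dl: "\<And>i. \<bar>l $ i - ls $ i\<bar> < m/2"
    proof -
      fix i
      have "\<bar>(l - ls) $ i\<bar> \<le> norm (l - ls)" by (rule component_le_norm_cart)
      also have "\<dots> \<le> norm ((x, l) - (xs, ls))" using norm_snd_le[of "l - ls" "x - xs"] by simp
      finally show "\<bar>l $ i - ls $ i\<bar> < m/2" using dist by simp
    qed
    have prod: "\<And>i. l $ i * x $ i \<le> (1 + C1) * mu"
    proof -
      fix i
      have "\<bar>(snd (Fmu g mu (x, l))) $ i\<bar> \<le> norm (snd (Fmu g mu (x, l)))" by (rule component_le_norm_cart)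
      also have "\<dots> \<le> norm (Fmu g mu (x, l))" by (metis prod.collapse norm_snd_le)
      finally have "\<bar>l $ i * x $ i - mu\<bar> \<le> C1 * mu" using A by (simp add: Fmu_def)
      thus "l $ i * x $ i \<le> (1 + C1) * mu" by (simp add: algebra_simps abs_le_iff)
    qed
    have xsb: "\<And>i. xs $ i \<le> norm xs" by (meson component_le_norm_cart abs_ge_self order_trans)
    have lsb: "\<And>i. ls $ i \<le> norm ls" by (meson component_le_norm_cart abs_ge_self order_trans)
    have nn: "0 \<le> norm xs" "0 \<le> norm ls" by simp_all
    have Cge1: "norm xs + norm ls + m \<le> C" "2 * (1 + C1) / m \<le> C" unfolding C_def by simp_all
    have small: "\<And>a b. c \<le> a \<Longrightarrow> 0 < b \<Longrightarrow> a * b \<le> (1 + C1) * mu \<Longrightarrow> b \<le> C * mu"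
    proof -
      fix a b :: real
      assume h: "c \<le> a" "0 < b" "a * b \<le> (1 + C1) * mu"
      have "c * b \<le> a * b" using h by (simp add: mult_right_mono)
      hence "m/2 * b \<le> (1 + C1) * mu" using h(3) unfolding c_def by linarith
      hence "b \<le> 2 * (1 + C1) / m * mu" using mpos by (simp add: field_simps)
      also have "\<dots> \<le> C * mu" using Cge1(2) A by (intro mult_right_mono) auto
      finally show "b \<le> C * mu" .
    qed
    have P1: "\<forall>i. xs $ i = 0 \<longrightarrow> x $ i \<le> C * mu \<and> c \<le> l $ i \<and> l $ i \<le> C"
    proof (intro allI impI conjI)
      fix i assume z: "xs $ i = 0"
      have cl: "c \<le> l $ i" using dl[of i] mle[of i] z unfolding c_def abs_less_iff by linarith
      thus "c \<le> l $ i" .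
      show "l $ i \<le> C" using dl[of i] lsb[of i] Cge1 nn unfolding abs_less_iff by linarith
      show "x $ i \<le> C * mu" using small[OF cl] A prod[of i] by auto
    qed
    have P2: "\<forall>i. xs $ i > 0 \<longrightarrow> c \<le> x $ i \<and> x $ i \<le> C \<and> l $ i \<le> C * mu"
    proof (intro allI impI conjI)
      fix i assume z: "xs $ i > 0"
      have "ls $ i = 0" using compl[of i] z by simp
      hence cx: "c \<le> x $ i" using dx[of i] mle[of i] unfolding c_def abs_less_iff by linarith
      thus "c \<le> x $ i" .
      show "x $ i \<le> C" using dx[of i] xsb[of i] Cge1 nn unfolding abs_less_iff by linarith
      show "l $ i \<le> C * mu" using small[OF cx] A prod[of i] by (auto simp: mult.commute)
    qed
    show "(\<forall>i. xs $ i = 0 \<longrightarrow> x $ i \<le> C * mu \<and> c \<le> l $ i \<and> l $ i \<le> C) \<and>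
      (\<forall>i. xs $ i > 0 \<longrightarrow> c \<le> x $ i \<and> x $ i \<le> C \<and> l $ i \<le> C * mu)" using P1 P2 by blast
  qed
  have "0 < m/4" using mpos by simp
  moreover have "mubar \<le> muhat" unfolding mubar_def by simp
  moreover have "0 < c" unfolding c_def using mpos by simp
  moreover have "c \<le> C" unfolding c_def C_def using mpos by (simp add: le_max_iff_disj)
  ultimately show ?thesis using main mubar_pos by blast
qed

end
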